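(* Let $e,h\in\omega^\omega$ be nondecreasing and unbounded, and suppose $e(l)\le\min\{n\in\omega: l<h(2^n)\}$ for all $l\in\omega$. Then $\mathcal{N}^{e^*}\subseteq\mathcal{J}_h$.
   Context: $2^\omega$ carries the metric $d(x,y)=2^{-\min\{n:x(n)\neq y(n)\}}$ for $x\neq y$ and $d(x,x)=0$. A gauge function is a nondecreasing $f\colon[0,\infty)\to[0,\infty)$ with $f(0)=0$, $\lim_{x\to0}f(x)=0$; $\mathcal{H}^f(A)=\lim_{\delta\to0}\inf\{\sum_nf(\operatorname{diam}C_n):A\subseteq\bigcup_nC_n,\ \operatorname{diam}C_n\le\delta\}$ and $\mathcal{N}^f=\{A\subseteq2^\omega:\mathcal{H}^f(A)=0\}$. For nondecreasing unbounded $e\in\omega^\omega$, $e^*$ is the gauge function with $e^*(0)=0$, $e^*(2^{-k})=2^{-e(k)}$ for all $k\in\omega$, linear on each interval $[2^{-k-1},2^{-k}]$ (and constant on $[1,\infty)$). For $\sigma\in(2^{<\omega})^\omega$, $(\operatorname{ht}\sigma)(n)=|\sigma(n)|$ and $[\sigma]_\infty=\{x\in2^\omega:\exists^\infty n\ \sigma(n)\subseteq x\}$; for $g\in\omega^\omega$, $\mathcal{J}_g=\{A\subseteq2^\omega:\exists\sigma\in(2^{<\omega})^\omega\,(\operatorname{ht}\sigma=g\wedge A\subseteq[\sigma]_\infty)\}$. *)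

theory Defs
  imports "HOL-Analysis.Analysis"
begin

definition cantor_dist :: "(nat \<Rightarrow> bool) \<Rightarrow> (nat \<Rightarrow> bool) \<Rightarrow> real" where
  "cantor_dist x y = (if x = y then 0 else (1/2) ^ (LEAST n. x n \<noteq> y n))"

definition cantor_diam :: "(nat \<Rightarrow> bool) set \<Rightarrow> real" where
  "cantor_diam C = (if C = {} then 0 else (SUP p\<in>C \<times> C. cantor_dist (fst p) (snd p)))"

definition hausdorff_delta :: "(real \<Rightarrow> real) \<Rightarrow> real \<Rightarrow> (nat \<Rightarrow> bool) set \<Rightarrow> ennreal" where
  "hausdorff_delta f \<delta> A =
     (INF C\<in>{C :: nat \<Rightarrow> (nat \<Rightarrow> bool) set. A \<subseteq> (\<Union>n. C n) \<and> (\<forall>n. cantor_diam (C n) \<le> \<delta>)}.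
        (\<Sum>n. ennreal (f (cantor_diam (C n)))))"

definition hausdorff :: "(real \<Rightarrow> real) \<Rightarrow> (nat \<Rightarrow> bool) set \<Rightarrow> ennreal" where
  "hausdorff f A = Lim (at_right (0::real)) (\<lambda>\<delta>. hausdorff_delta f \<delta> A)"

definition null_f :: "(real \<Rightarrow> real) \<Rightarrow> (nat \<Rightarrow> bool) set set" where
  "null_f f = {A. hausdorff f A = 0}"

text \<open>The gauge e^*: e^*(0)=0, e^*(2^-k) = 2^-e(k), linear on [2^-(k+1), 2^-k],
  constant on [1,\<infinity>).  For 0 < x < 1, k = floor(-log2 x) gives 2^-(k+1) < x \<le> 2^-k.\<close>
definition estar :: "(nat \<Rightarrow> nat) \<Rightarrow> real \<Rightarrow> real" where
  "estar e x =
     (if x \<le> 0 then 0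
      else if 1 \<le> x then (1/2) ^ e 0
      else (let k = nat \<lfloor>- log 2 x\<rfloor>;
                a = (1/2) ^ (k+1); b = (1/2) ^ k
            in (1/2) ^ e (k+1) + (x - a) / (b - a) * ((1/2) ^ e k - (1/2) ^ e (k+1))))"

definition init_seg :: "bool list \<Rightarrow> (nat \<Rightarrow> bool) \<Rightarrow> bool" where
  "init_seg s x \<longleftrightarrow> (\<forall>i<length s. x i = s ! i)"

definition inf_often_set :: "(nat \<Rightarrow> bool list) \<Rightarrow> (nat \<Rightarrow> bool) set" where
  "inf_often_set \<sigma> = {x. \<exists>\<^sub>\<infinity> n. init_seg (\<sigma> n) x}"

definition J_ideal :: "(nat \<Rightarrow> nat) \<Rightarrow> (nat \<Rightarrow> bool) set set" where
  "J_ideal g = {A. \<exists>\<sigma>. (\<forall>n. length (\<sigma> n) = g n) \<and> A \<subseteq> inf_often_set \<sigma>}"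

end

theory Submission imports Defs "HOL-Library.Infinite_Set" "HOL-Library.Nat_Bijection" begin

lemma estar_pow: "estar e ((1/2)^L) = (1/2)^(e L)"
proof (cases "L = 0")
  case True then show ?thesis by (simp add: estar_def)
next
  case False
  have lt: "(1/2::real)^L < 1" using False by (simp add: power_less_one_iff)
  have pos: "(0::real) < (1/2)^L" by simp
  have lg: "log 2 ((1/2::real)^L) = - real L"
    by (simp add: log_nat_power log_divide)
  have "nat \<lfloor>- log 2 ((1/2::real)^L)\<rfloor> = L" using lg by simp
  moreover have "(1/2::real)^L - (1/2)^(L+1) \<noteq> 0" by simp
  ultimately show ?thesis using lt pos by (simp add: estar_def Let_def not_le)
qed

lemma hd_zero:
  assumes "hausdorff f A = 0" "(\<delta>::real) > 0"
  shows "hausdorff_delta f \<delta> A = 0"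
proof -
  define g where "g = (\<lambda>d. hausdorff_delta f d A)"
  have anti: "g d' \<le> g d" if "d \<le> d'" for d d'
    unfolding g_def hausdorff_delta_def
    by (rule INF_superset_mono) (use that in \<open>auto intro: order_trans\<close>)
  define S where "S = (SUP d\<in>{0<..}. g d)"
  have lim: "(g \<longlongrightarrow> S) (at_right 0)"
  proof (rule order_tendstoI)
    fix a assume "a < S"
    then obtain d1 where d1: "d1 > 0" "a < g d1" unfolding S_def by (auto simp: less_SUP_iff)
    show "\<forall>\<^sub>F x in at_right 0. a < g x"
      unfolding eventually_at_right_field
      using d1 anti by (intro exI[of _ d1]) (auto intro: less_le_trans)
  next
    fix a assume "S < a"
    show "\<forall>\<^sub>F x in at_right 0. g x < a"
      unfolding eventually_at_right_field
      proof (intro exI[of _ 1], safe)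
        fix y :: real assume "0 < y"
        then have "g y \<le> S" unfolding S_def by (intro SUP_upper) auto
        then show "g y < a" using \<open>S < a\<close> by simp
      qed simp
  qed
  have "hausdorff f A = S" unfolding hausdorff_def g_def[symmetric]
    using lim by (intro tendsto_Lim) auto
  then have "S = 0" using assms by simp
  then show ?thesis using assms(2) SUP_upper[of \<delta> "{0<..}" g] unfolding S_def g_def by auto
qed

lemma diam_pos:
  assumes "x0 \<in> C" "y0 \<in> C" "x0 \<noteq> y0"
  shows "\<exists>L. cantor_diam C = (1/2)^L \<and> (\<forall>x\<in>C. \<forall>y\<in>C. \<forall>i<L. x i = y i)"
proof -
  define m0 where "m0 = (LEAST m. \<exists>x\<in>C. \<exists>y\<in>C. x \<noteq> y \<and> (LEAST n. x n \<noteq> y n) = m)"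
  have ex: "\<exists>x\<in>C. \<exists>y\<in>C. x \<noteq> y \<and> (LEAST n. x n \<noteq> y n) = m0"
    unfolding m0_def by (rule LeastI[of _ "LEAST n. x0 n \<noteq> y0 n"]) (use assms in auto)
  have lb: "m0 \<le> (LEAST n. x n \<noteq> y n)" if "x \<in> C" "y \<in> C" "x \<noteq> y" for x y
    unfolding m0_def by (rule Least_le) (use that in auto)
  have agree: "\<forall>x\<in>C. \<forall>y\<in>C. \<forall>i<m0. x i = y i"
  proof (intro ballI allI impI, rule ccontr)
    fix x y i assume h: "x \<in> C" "y \<in> C" "i < m0" "x i \<noteq> y i"
    then have "x \<noteq> y" by auto
    have "(LEAST n. x n \<noteq> y n) \<le> i" using h by (intro Least_le) 
    then show False using lb[OF h(1,2) \<open>x\<noteq>y\<close>] h(3) by simp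
  qed
  have ne: "C \<noteq> {}" using assms(1) by auto
  have "cantor_diam C = (1/2)^m0"
    unfolding cantor_diam_def if_not_P[OF ne]
  proof (intro cSup_eq_maximum)
    show "(1/2)^m0 \<in> (\<lambda>p. cantor_dist (fst p) (snd p)) ` (C \<times> C)"
      using ex by (force simp: cantor_dist_def)
  next
    fix d assume "d \<in> (\<lambda>p. cantor_dist (fst p) (snd p)) ` (C \<times> C)"
    then obtain x y where xy: "x \<in> C" "y \<in> C" "d = cantor_dist x y" by auto
    show "d \<le> (1/2)^m0"
    proof (cases "x = y")
      case True then show ?thesis using xy by (simp add: cantor_dist_def)
    next
      case False
      then show ?thesis using xy lb[OF xy(1,2) False]
        by (simp add: cantor_dist_def power_decreasing)
    qed
  qed
  then show ?thesis using agree by blast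
qed

lemma geo_eq: "(\<Sum>j<m. (1/2::real)^(j+4)) = 1/8 - (1/2)^(m+3)"
  by (induction m) (simp_all add: power_add power_one_over)

lemma finite_count:
  fixes c :: "nat \<Rightarrow> real" and Q :: "nat \<Rightarrow> bool"
  assumes sum: "(\<Sum>n. ennreal (c n)) < ennreal \<epsilon>"
    and cq: "\<And>n. Q n \<Longrightarrow> c n = (1/2)^m"
    and eps: "0 \<le> \<epsilon>" "\<epsilon> \<le> 1"
  shows "finite {n. Q n} \<and> real (card {n. Q n}) * (1/2)^m \<le> \<epsilon>"
proof -
  have key: "real (card F) * (1/2)^m < \<epsilon>" if F: "finite F" "F \<subseteq> {n. Q n}" for F
  proof -
    have "(\<Sum>n\<in>F. ennreal (c n)) \<le> (\<Sum>n. ennreal (c n))"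
      by (rule sum_le_suminf) (use F in auto)
    moreover have "(\<Sum>n\<in>F. ennreal (c n)) = (\<Sum>n\<in>F. ennreal ((1/2)^m))"
      using F cq by (intro sum.cong) auto
    moreover have "(\<Sum>n\<in>F. ennreal ((1/2::real)^m)) = ennreal (real (card F) * (1/2)^m)"
      by (simp add: ennreal_mult' ennreal_of_nat_eq_real_of_nat)
    ultimately have "ennreal (real (card F) * (1/2)^m) < ennreal \<epsilon>" using sum by simp
    then show ?thesis using eps by (simp add: ennreal_less_iff)
  qed
  have fin: "finite {n. Q n}"
  proof (rule ccontr)
    assume "infinite {n. Q n}"
    then obtain F where F: "finite F" "card F = 2^m" "F \<subseteq> {n. Q n}"
      using infinite_arbitrarily_large by blast
    have "real (card F) * (1/2)^m < \<epsilon>" using key[OF F(1,3)] .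
    then have "(2::real)^m * (1/2)^m < \<epsilon>" using F(2) by simp
    moreover have "(2::real)^m * (1/2)^m = 1" by (simp add: power_mult_distrib[symmetric])
    ultimately show False using eps by simp
  qed
  then show ?thesis using key[OF fin order_refl] by simp
qed

theorem lemma3p3:
  fixes e h :: "nat \<Rightarrow> nat"
  assumes "mono e" and "\<forall>m. \<exists>n. m < e n"
    and "mono h" and "\<forall>m. \<exists>n. m < h n"
    and "\<forall>l. e l \<le> (LEAST n. l < h (2 ^ n))"
  shows "null_f (estar e) \<subseteq> J_ideal h"
proof
  fix A assume "A \<in> null_f (estar e)"
  then have H0: "hausdorff (estar e) A = 0" by (simp add: null_f_def)
  have "\<forall>j. \<exists>k. j + 3 < e k" using assms(2) by blast
  then have "\<exists>K. \<forall>j. j + 3 < e (K j)" by (rule choice)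
  then obtain K where K0: "\<forall>j. j + 3 < e (K j)" by (rule exE)
  note K = K0[rule_format]
  have ex: "\<exists>C. A \<subseteq> (\<Union>n. C n) \<and> (\<forall>n. cantor_diam (C n) \<le> (1/2)^K j)
      \<and> (\<Sum>n. ennreal (estar e (cantor_diam (C n)))) < ennreal ((1/2)^(j+4))" for j
  proof -
    have "hausdorff_delta (estar e) ((1/2)^K j) A = 0" by (rule hd_zero[OF H0]) simp
    then have "hausdorff_delta (estar e) ((1/2)^K j) A < ennreal ((1/2)^(j+4))" by simp
    then obtain C where "C \<in> {C. A \<subseteq> (\<Union>n. C n) \<and> (\<forall>n. cantor_diam (C n) \<le> (1/2)^K j)}"
       "(\<Sum>n. ennreal (estar e (cantor_diam (C n)))) < ennreal ((1/2)^(j+4))"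
      unfolding hausdorff_delta_def INF_less_iff by blast
    then show ?thesis by blast
  qed
  from choice[OF allI[OF ex]] obtain C where C0: "\<forall>j. A \<subseteq> (\<Union>n. C j n) \<and> (\<forall>n. cantor_diam (C j n) \<le> (1/2)^K j)
      \<and> (\<Sum>n. ennreal (estar e (cantor_diam (C j n)))) < ennreal ((1/2)^(j+4))" by (rule exE)
  have C: "\<And>j. A \<subseteq> (\<Union>n. C j n)" "\<And>j n. cantor_diam (C j n) \<le> (1/2)^K j"
      "\<And>j. (\<Sum>n. ennreal (estar e (cantor_diam (C j n)))) < ennreal ((1/2)^(j+4))"
    using C0 by meson+
  define P where "P j n \<longleftrightarrow> (\<exists>x\<in>C j n. \<exists>y\<in>C j n. x \<noteq> y)" for j n
  define L where "L j n = (SOME l. cantor_diam (C j n) = (1/2)^l \<and> (\<forall>x\<in>C j n. \<forall>y\<in>C j n. \<forall>i<l. x i = y i))" for j n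
  have L: "cantor_diam (C j n) = (1/2)^L j n \<and> (\<forall>x\<in>C j n. \<forall>y\<in>C j n. \<forall>i<L j n. x i = y i)"
    if Pjn: "P j n" for j n
  proof -
    obtain x y where "x \<in> C j n" "y \<in> C j n" "x \<noteq> y" using Pjn unfolding P_def by blast
    from diam_pos[OF this] show ?thesis unfolding L_def by (rule someI_ex)
  qed
  have KL: "K j \<le> L j n" if "P j n" for j n
    using C(2)[of j n] L[OF that] by simp
  have eL: "j + 4 \<le> e (L j n)" if "P j n" for j n
    using K[of j] monoD[OF assms(1) KL[OF that]] by simp
  have cost: "estar e (cantor_diam (C j n)) = (1/2)^e (L j n)" if "P j n" for j n
    using L[OF that] estar_pow by simp
  define S where "S j m = {n. P j n \<and> e (L j n) = m}" for j m
  have Sb: "finite (S j m) \<and> real (card (S j m)) * (1/2)^m \<le> (1/2)^(j+4)" for j m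
  proof -
    have "finite {n. P j n \<and> e (L j n) = m} \<and> real (card {n. P j n \<and> e (L j n) = m}) * (1/2)^m \<le> (1/2)^(j+4)"
    proof (rule finite_count[OF C(3)[of j]])
      fix n assume "P j n \<and> e (L j n) = m"
      then show "estar e (cantor_diam (C j n)) = (1/2)^m" using cost[of j n] by simp
    next
      show "(0::real) \<le> (1/2)^(j+4)" by simp
      show "(1/2::real)^(j+4) \<le> 1" by (rule power_le_one) auto
    qed
    then show ?thesis unfolding S_def .
  qed
  define T where "T m = {jn. P (fst jn) (snd jn) \<and> e (L (fst jn) (snd jn)) = m}" for m
  have TS: "T m \<subseteq> Sigma {..<m} (\<lambda>j. S j m)" for m
    unfolding T_def S_def using eL by force
  have finT: "finite (T m)" for m
    using TS Sb by (meson finite_SigmaI finite_lessThan finite_subset)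
  have cardT: "card (T m) \<le> 2^(m-3)" if "4 \<le> m" for m
  proof -
    have "card (T m) \<le> card (Sigma {..<m} (\<lambda>j. S j m))"
      using TS Sb by (intro card_mono) auto
    also have "\<dots> = (\<Sum>j<m. card (S j m))" using Sb by (simp add: card_SigmaI)
    finally have "real (card (T m)) \<le> (\<Sum>j<m. real (card (S j m)))" by (simp flip: of_nat_sum)
    also have "\<dots> \<le> (\<Sum>j<m. (1/2)^(j+4) * 2^m)"
    proof (intro sum_mono)
      fix j
      have "real (card (S j m)) = real (card (S j m)) * (1/2)^m * 2^m"
        by (simp add: power_one_over field_simps)
      also have "\<dots> \<le> (1/2)^(j+4) * 2^m" using Sb[of j m] by (intro mult_right_mono) auto
      finally show "real (card (S j m)) \<le> (1/2)^(j+4) * 2^m" .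
    qed
    also have "\<dots> = (\<Sum>j<m. (1/2::real)^(j+4)) * 2^m" by (simp add: sum_distrib_right)
    also have "\<dots> \<le> 1/8 * 2^m" unfolding geo_eq by (intro mult_right_mono) auto
    also have "\<dots> = 2^(m-3)"
    proof -
      have "\<exists>k. m = k + 3" using that by presburger
      then obtain k where "m = k + 3" by blast
      then show ?thesis by (simp add: power_add)
    qed
    finally have "real (card (T m)) \<le> real (2^(m-3))" by simp
    then show ?thesis by (simp only: of_nat_le_iff)
  qed
  define F where "F m = (SOME f. inj_on f (T m) \<and> f ` T m \<subseteq> {..<card (T m)})" for m
  have F: "inj_on (F m) (T m) \<and> F m ` T m \<subseteq> {..<card (T m)}" for m
  proof -
    obtain f where "bij_betw f (T m) {0..<card (T m)}" using ex_bij_betw_finite_nat finT by blast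
    then have "inj_on f (T m) \<and> f ` T m \<subseteq> {..<card (T m)}"
      by (auto simp: bij_betw_def)
    then have "\<exists>f. inj_on f (T m) \<and> f ` T m \<subseteq> {..<card (T m)}" by blast
    then show ?thesis unfolding F_def by (rule someI_ex)
  qed
  define B where "B jn = 2^(e (L (fst jn) (snd jn)) - 3) + F (e (L (fst jn) (snd jn))) jn" for jn
  define idx where "idx jn = (if P (fst jn) (snd jn) then 2 * B jn else 2 * prod_encode jn + 1)" for jn
  have Bb: "2^(e (L (fst jn) (snd jn)) - 3) \<le> B jn \<and> B jn < 2^(e (L (fst jn) (snd jn)) - 2)
     \<and> 4 \<le> e (L (fst jn) (snd jn))" if "P (fst jn) (snd jn)" for jn
  proof -
    define m where "m = e (L (fst jn) (snd jn))"
    have m4: "4 \<le> m" using eL[OF that] unfolding m_def by simp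
    have "jn \<in> T m" using that unfolding T_def m_def by simp
    then have "F m jn < 2^(m-3)" using F[of m] cardT[OF m4] by auto
    moreover have "\<exists>k. m = k + 4" using m4 by presburger
    then obtain k where "m = k + 4" by blast
    ultimately show ?thesis unfolding B_def m_def[symmetric] by (simp add: power_add)
  qed
  have hidx: "h (idx jn) \<le> L (fst jn) (snd jn)" if "P (fst jn) (snd jn)" for jn
  proof -
    define l where "l = L (fst jn) (snd jn)"
    define m where "m = e l"
    have m4: "4 \<le> m" and Bl: "B jn < 2^(m-2)" using Bb[OF that] unfolding m_def l_def by auto
    have "\<exists>k. m = k + 4" using m4 by presburger
    then obtain k where k: "m = k + 4" by blast
    have "idx jn = 2 * B jn" using that by (simp add: idx_def)
    also have "\<dots> \<le> 2^(m-1)" using Bl k by (simp add: power_add)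
    finally have "idx jn \<le> 2^(m-1)" .
    then have 1: "h (idx jn) \<le> h (2^(m-1))" using assms(3) by (simp add: monoD)
    have "m - 1 < (LEAST n. l < h (2^n))" using assms(5)[rule_format, of l] m4 unfolding m_def by linarith
    then have "\<not> l < h (2^(m-1))" by (rule not_less_Least)
    then show ?thesis using 1 unfolding l_def by simp
  qed
  have lt: "B a \<noteq> B b" if "P (fst a) (snd a)" "P (fst b) (snd b)"
     "e (L (fst a) (snd a)) < e (L (fst b) (snd b))" for a b
  proof -
    have f1: "B a < 2^(e (L (fst a) (snd a))-2)" and f3: "2^(e (L (fst b) (snd b))-3) \<le> B b"
      and f4: "4 \<le> e (L (fst a) (snd a))"
      using Bb[OF that(1)] Bb[OF that(2)] by auto
    have f2: "(2::nat)^(e (L (fst a) (snd a))-2) \<le> 2^(e (L (fst b) (snd b))-3)"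
      using that(3) f4 by (intro power_increasing) auto
    from f1 f2 f3 show ?thesis by linarith
  qed
  have inj_idx: "inj idx"
  proof (rule injI)
    fix a b assume ab: "idx a = idx b"
    show "a = b"
    proof (cases "P (fst a) (snd a)"; cases "P (fst b) (snd b)")
      assume pa: "P (fst a) (snd a)" and pb: "P (fst b) (snd b)"
      then have Bab: "B a = B b" using ab unfolding idx_def by simp
      have meq: "e (L (fst a) (snd a)) = e (L (fst b) (snd b))"
        using lt[OF pa pb] lt[OF pb pa] Bab by (metis linorder_neqE_nat)
      define m where "m = e (L (fst a) (snd a))"
      have "a \<in> T m" "b \<in> T m" using pa pb meq unfolding T_def m_def by auto
      moreover have "F m a = F m b" using Bab meq unfolding B_def m_def by simp
      ultimately show "a = b" using F[of m] by (auto dest: inj_onD)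
    next
      assume "P (fst a) (snd a)" "\<not> P (fst b) (snd b)"
      then have "2 * B a = 2 * prod_encode b + 1 \<or> 2 * prod_encode a + 1 = 2 * B b" using ab unfolding idx_def by simp
      then have False by presburger
      then show "a = b" ..
    next
      assume "\<not> P (fst a) (snd a)" "P (fst b) (snd b)"
      then have "2 * B a = 2 * prod_encode b + 1 \<or> 2 * prod_encode a + 1 = 2 * B b" using ab unfolding idx_def by simp
      then have False by presburger
      then show "a = b" ..
    next
      assume "\<not> P (fst a) (snd a)" "\<not> P (fst b) (snd b)"
      then show "a = b" using ab unfolding idx_def by (simp add: inj_prod_encode[THEN inj_onD])
    qed
  qed
  define rep where "rep i = (SOME x. \<exists>jn. idx jn = i \<and> x \<in> C (fst jn) (snd jn))" for i
  define \<sigma> where "\<sigma> i = map (rep i) [0..<h i]" for i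
  have repC: "rep (idx jn) \<in> C (fst jn) (snd jn)" if xin: "x \<in> C (fst jn) (snd jn)" for jn x
  proof -
    have "\<exists>y. \<exists>jn'. idx jn' = idx jn \<and> y \<in> C (fst jn') (snd jn')" using xin by blast
    then have "\<exists>jn'. idx jn' = idx jn \<and> rep (idx jn) \<in> C (fst jn') (snd jn')"
      unfolding rep_def by (rule someI_ex)
    then obtain jn' where j1: "idx jn' = idx jn" and j2: "rep (idx jn) \<in> C (fst jn') (snd jn')" by blast
    have "jn' = jn" using injD[OF inj_idx j1] .
    then show ?thesis using j2 by simp
  qed
  have seg: "init_seg (\<sigma> (idx jn)) x" if xin: "x \<in> C (fst jn) (snd jn)" for jn x
  proof -
    have r: "rep (idx jn) \<in> C (fst jn) (snd jn)" by (rule repC[OF xin])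
    have "x i = rep (idx jn) i" if il: "i < h (idx jn)" for i
    proof (cases "P (fst jn) (snd jn)")
      case True
      have hl: "h (idx jn) \<le> L (fst jn) (snd jn)" by (rule hidx[OF True])
      have iL: "i < L (fst jn) (snd jn)" using il hl by (rule less_le_trans)
      have ag: "\<forall>x\<in>C (fst jn) (snd jn). \<forall>y\<in>C (fst jn) (snd jn). \<forall>i<L (fst jn) (snd jn). x i = y i"
        using L[OF True] by (rule conjunct2)
      show ?thesis using ag[rule_format, OF xin r iL] .
    next
      case False
      then have "\<forall>x\<in>C (fst jn) (snd jn). \<forall>y\<in>C (fst jn) (snd jn). x = y" unfolding P_def by simp
      then have "x = rep (idx jn)" using xin r by simp
      then show ?thesis by simp
    qed
    then show ?thesis unfolding init_seg_def \<sigma>_def by simp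
  qed
  show "A \<in> J_ideal h" unfolding J_ideal_def
  proof (intro CollectI exI conjI allI)
    fix i show "length (\<sigma> i) = h i" by (simp add: \<sigma>_def)
  next
    show "A \<subseteq> inf_often_set \<sigma>"
    proof
      fix x assume xA: "x \<in> A"
      have "\<forall>j. \<exists>n. x \<in> C j n" using C(1) xA by blast
      then have "\<exists>N. \<forall>j. x \<in> C j (N j)" by (rule choice)
      then obtain N where N: "\<forall>j. x \<in> C j (N j)" by (rule exE)
      define \<phi> where "\<phi> j = idx (j, N j)" for j
      have "inj \<phi>"
      proof (rule injI)
        fix a b assume "\<phi> a = \<phi> b"
        then have "(a, N a) = (b, N b)" unfolding \<phi>_def by (rule injD[OF inj_idx])
        then show "a = b" by simp
      qed
      then have inf: "infinite (range \<phi>)" by (rule range_inj_infinite)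
      have "init_seg (\<sigma> (\<phi> j)) x" for j unfolding \<phi>_def using seg[of x "(j, N j)"] N by simp
      then have "range \<phi> \<subseteq> {i. init_seg (\<sigma> i) x}" by blast
      then have "infinite {i. init_seg (\<sigma> i) x}" using inf infinite_super by blast
      then show "x \<in> inf_often_set \<sigma>" unfolding inf_often_set_def by (simp add: frequently_cofinite)
    qed
  qed
qed

end
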